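(* Let $\mathbb{F}$ be an infinite field with $\operatorname{char}(\mathbb{F})\neq 2$ and let $G$ be a non-abelian group with a group involution $\ast$ and a non-trivial orientation $\sigma:G\to\{\pm1\}$ such that $gg^\ast\in N=\ker\sigma$ for all $g\in G$. Suppose $\mathbb{F}G$ is normal with respect to the oriented involution $\circledast$ and that $N$ is abelian. Then $x^\ast=x$ for all $x\in G\setminus N$, and $n^\ast=a^{-1}na=ana^{-1}$ for all $n\in N$ and all $a\in G\setminus N$.
   Context: A group involution on $G$ is a map $\ast:G\to G$ with $(gh)^\ast=h^\ast g^\ast$ and $(g^\ast)^\ast=g$. An orientation is a group homomorphism $\sigma:G\to\{\pm1\}$. The oriented involution is $(\sum_g\alpha_g g)^\circledast=\sum_g\alpha_g\sigma(g)g^\ast$ on $\mathbb{F}G$. $\mathbb{F}G$ is normal if $\alpha\alpha^\circledast=\alpha^\circledast\alpha$ for all $\alpha\in\mathbb{F}G$. *)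

theory Defs
  imports "HOL-Algebra.Group"
begin

definition group_involution :: "('g, 'b) monoid_scheme \<Rightarrow> ('g \<Rightarrow> 'g) \<Rightarrow> bool" where
  "group_involution G s \<longleftrightarrow>
     (\<forall>g\<in>carrier G. s g \<in> carrier G) \<and>
     (\<forall>g\<in>carrier G. \<forall>h\<in>carrier G. s (g \<otimes>\<^bsub>G\<^esub> h) = s h \<otimes>\<^bsub>G\<^esub> s g) \<and>
     (\<forall>g\<in>carrier G. s (s g) = g)"

definition orientation :: "('g, 'b) monoid_scheme \<Rightarrow> ('g \<Rightarrow> int) \<Rightarrow> bool" where
  "orientation G \<sigma> \<longleftrightarrow>
     (\<forall>g\<in>carrier G. \<sigma> g \<in> {1, -1}) \<and>
     (\<forall>g\<in>carrier G. \<forall>h\<in>carrier G. \<sigma> (g \<otimes>\<^bsub>G\<^esub> h) = \<sigma> g * \<sigma> h)"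

definition orient_kernel :: "('g, 'b) monoid_scheme \<Rightarrow> ('g \<Rightarrow> int) \<Rightarrow> 'g set" where
  "orient_kernel G \<sigma> = {g \<in> carrier G. \<sigma> g = 1}"

text \<open>Elements of the group ring FG: finitely supported coefficient functions on the carrier.\<close>
definition group_ring_elem :: "('g, 'b) monoid_scheme \<Rightarrow> ('g \<Rightarrow> 'f::field) \<Rightarrow> bool" where
  "group_ring_elem G a \<longleftrightarrow>
     (\<forall>x. x \<notin> carrier G \<longrightarrow> a x = 0) \<and> finite {x \<in> carrier G. a x \<noteq> 0}"

definition gr_mult :: "('g, 'b) monoid_scheme \<Rightarrow> ('g \<Rightarrow> 'f::field) \<Rightarrow> ('g \<Rightarrow> 'f) \<Rightarrow> 'g \<Rightarrow> 'f" where
  "gr_mult G a b x =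
     (if x \<in> carrier G
      then (\<Sum>g\<in>{g \<in> carrier G. a g \<noteq> 0}. a g * b (inv\<^bsub>G\<^esub> g \<otimes>\<^bsub>G\<^esub> x))
      else 0)"

text \<open>Oriented involution: (sum a_g g)^o = sum a_g sigma(g) g^*, so the coefficient at h is
  sigma(h^*) a_(h^*).\<close>
definition oriented_inv :: "('g, 'b) monoid_scheme \<Rightarrow> ('g \<Rightarrow> 'g) \<Rightarrow> ('g \<Rightarrow> int) \<Rightarrow> ('g \<Rightarrow> 'f::field) \<Rightarrow> 'g \<Rightarrow> 'f" where
  "oriented_inv G s \<sigma> a h = (if h \<in> carrier G then of_int (\<sigma> (s h)) * a (s h) else 0)"

definition normal_group_ring :: "('g, 'b) monoid_scheme \<Rightarrow> ('g \<Rightarrow> 'g) \<Rightarrow> ('g \<Rightarrow> int) \<Rightarrow> 'f::field itself \<Rightarrow> bool" where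
  "normal_group_ring G s \<sigma> (_::'f itself) \<longleftrightarrow>
     (\<forall>a :: 'g \<Rightarrow> 'f. group_ring_elem G a \<longrightarrow>
        gr_mult G a (oriented_inv G s \<sigma> a) = gr_mult G (oriented_inv G s \<sigma> a) a)"

end

theory Submission
  imports Defs
begin

definition dlt :: "'a \<Rightarrow> 'a \<Rightarrow> 'f::field" where
  "dlt p = (\<lambda>x. if x = p then 1 else 0)"

context group
begin

lemma gr_mult_finite:
  assumes "finite S" "S \<subseteq> carrier G" "\<forall>g\<in>carrier G - S. a g = 0"
  shows "gr_mult G a b x = (if x \<in> carrier G then (\<Sum>g\<in>S. a g * b (inv g \<otimes> x)) else 0)"
proof (cases "x \<in> carrier G")
  case True
  have "(\<Sum>g\<in>{g \<in> carrier G. a g \<noteq> 0}. a g * b (inv g \<otimes> x)) = (\<Sum>g\<in>S. a g * b (inv g \<otimes> x))"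
    by (rule sum.mono_neutral_left) (use assms in auto)
  then show ?thesis using True by (simp add: gr_mult_def)
qed (simp add: gr_mult_def)

lemma gr_mult_two:
  assumes "p \<in> carrier G" "q \<in> carrier G" "p \<noteq> q"
  shows "gr_mult G (\<lambda>k. c * dlt p k + d * dlt q k) b x =
    (if x \<in> carrier G then c * b (inv p \<otimes> x) + d * b (inv q \<otimes> x) else 0)"
  using gr_mult_finite[of "{p,q}" "(\<lambda>k. c * dlt p k + d * dlt q k)" b x] assms
  by (auto simp: dlt_def)

lemma gr_mult_one:
  assumes "p \<in> carrier G"
  shows "gr_mult G (\<lambda>k. c * dlt p k) b x =
    (if x \<in> carrier G then c * b (inv p \<otimes> x) else 0)"
  using gr_mult_finite[of "{p}" "(\<lambda>k. c * dlt p k)" b x] assms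
  by (auto simp: dlt_def)

lemma dlt_shift:
  assumes "g \<in> carrier G" "p \<in> carrier G" "x \<in> carrier G"
  shows "dlt p (inv g \<otimes> x) = dlt (g \<otimes> p) x"
  using assms by (auto simp: dlt_def inv_solve_left')

lemma invol_facts:
  assumes "group_involution G s"
  shows "\<And>g. g \<in> carrier G \<Longrightarrow> s g \<in> carrier G"
    and "\<And>g h. g \<in> carrier G \<Longrightarrow> h \<in> carrier G \<Longrightarrow> s (g \<otimes> h) = s h \<otimes> s g"
    and "\<And>g. g \<in> carrier G \<Longrightarrow> s (s g) = g"
  using assms unfolding group_involution_def by auto

lemma oinv_two:
  assumes inv: "group_involution G s" and g: "g \<in> carrier G" and h: "h \<in> carrier G"
  shows "oriented_inv G s \<sigma> (\<lambda>k. (1::'f::field) * dlt g k + 1 * dlt h k)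
     = (\<lambda>k. of_int (\<sigma> g) * dlt (s g) k + of_int (\<sigma> h) * dlt (s h) k)"
proof
  fix k
  show "oriented_inv G s \<sigma> (\<lambda>k. (1::'f::field) * dlt g k + 1 * dlt h k) k
     = of_int (\<sigma> g) * dlt (s g) k + of_int (\<sigma> h) * dlt (s h) k"
  proof (cases "k \<in> carrier G")
    case True
    have e1: "s k = g \<longleftrightarrow> k = s g" and e2: "s k = h \<longleftrightarrow> k = s h"
      using invol_facts[OF inv] True g h by metis+
    show ?thesis using True e1 e2 by (auto simp: oriented_inv_def dlt_def)
  next
    case False
    then show ?thesis using invol_facts(1)[OF inv] g h
      by (auto simp: oriented_inv_def dlt_def)
  qed
qed

lemma oinv_one:
  assumes inv: "group_involution G s" and g: "g \<in> carrier G"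
  shows "oriented_inv G s \<sigma> (dlt g :: _ \<Rightarrow> 'f::field)
     = (\<lambda>k. of_int (\<sigma> g) * dlt (s g) k)"
proof
  fix k
  show "oriented_inv G s \<sigma> (dlt g :: _ \<Rightarrow> 'f::field) k = of_int (\<sigma> g) * dlt (s g) k"
  proof (cases "k \<in> carrier G")
    case True
    have e1: "s k = g \<longleftrightarrow> k = s g"
      using invol_facts[OF inv] True g by metis
    show ?thesis using True e1 by (auto simp: oriented_inv_def dlt_def)
  next
    case False
    then show ?thesis using invol_facts(1)[OF inv] g
      by (auto simp: oriented_inv_def dlt_def)
  qed
qed

lemma single_eq:
  assumes inv: "group_involution G s" and nrm: "normal_group_ring G s \<sigma> TYPE('f::field)"
    and g: "g \<in> carrier G" and z: "z \<in> carrier G"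
  shows "(of_int (\<sigma> g) * dlt (g \<otimes> s g) z :: 'f) = of_int (\<sigma> g) * dlt (s g \<otimes> g) z"
proof -
  have el: "group_ring_elem G (dlt g :: _ \<Rightarrow> 'f)"
    using g by (auto simp: group_ring_elem_def dlt_def)
  have "gr_mult G (dlt g) (oriented_inv G s \<sigma> (dlt g)) z
      = gr_mult G (oriented_inv G s \<sigma> (dlt g)) (dlt g :: _ \<Rightarrow> 'f) z"
    using nrm el unfolding normal_group_ring_def by metis
  then have "gr_mult G (dlt g) (\<lambda>k. of_int (\<sigma> g) * dlt (s g) k) z
      = gr_mult G (\<lambda>k. of_int (\<sigma> g) * dlt (s g) k) (dlt g :: _ \<Rightarrow> 'f) z"
    unfolding oinv_one[OF inv g, where \<sigma>=\<sigma>] .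
  moreover have "dlt g = (\<lambda>k. (1::'f) * dlt g k)" by simp
  ultimately have "gr_mult G (\<lambda>k. (1::'f) * dlt g k) (\<lambda>k. of_int (\<sigma> g) * dlt (s g) k) z
      = gr_mult G (\<lambda>k. of_int (\<sigma> g) * dlt (s g) k) (dlt g :: _ \<Rightarrow> 'f) z"
    by simp
  moreover have "gr_mult G (\<lambda>k. (1::'f) * dlt g k) (\<lambda>k. of_int (\<sigma> g) * dlt (s g) k) z
     = 1 * (of_int (\<sigma> g) * dlt (s g) (inv g \<otimes> z))"
    using gr_mult_one[OF g, where c=1 and b="\<lambda>k. of_int (\<sigma> g) * dlt (s g) k" and x=z] z by simp
  moreover have sg: "s g \<in> carrier G" using invol_facts(1)[OF inv g] .
  moreover have "gr_mult G (\<lambda>k. of_int (\<sigma> g) * dlt (s g) k) (dlt g :: _ \<Rightarrow> 'f) z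
     = of_int (\<sigma> g) * dlt g (inv (s g) \<otimes> z)"
    using gr_mult_one[OF sg, where c="of_int (\<sigma> g)" and b="dlt g" and x=z] z by simp
  ultimately show ?thesis
    by (simp only: dlt_shift[OF g _ z] dlt_shift[OF sg _ z] g sg mult_1)
qed

lemma pair_eq:
  assumes inv: "group_involution G s" and nrm: "normal_group_ring G s \<sigma> TYPE('f::field)"
    and g: "g \<in> carrier G" and h: "h \<in> carrier G" and gh: "g \<noteq> h" and z: "z \<in> carrier G"
  shows "(of_int (\<sigma> g) * dlt (g \<otimes> s g) z + of_int (\<sigma> h) * dlt (g \<otimes> s h) z
          + (of_int (\<sigma> g) * dlt (h \<otimes> s g) z + of_int (\<sigma> h) * dlt (h \<otimes> s h) z) :: 'f)
       = of_int (\<sigma> g) * (dlt (s g \<otimes> g) z + dlt (s g \<otimes> h) z)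
          + of_int (\<sigma> h) * (dlt (s h \<otimes> g) z + dlt (s h \<otimes> h) z)"
proof -
  let ?a = "\<lambda>k. (1::'f) * dlt g k + 1 * dlt h k"
  have "{x \<in> carrier G. ?a x \<noteq> 0} \<subseteq> {g,h}" by (auto simp: dlt_def)
  then have "finite {x \<in> carrier G. ?a x \<noteq> 0}" by (rule finite_subset) simp
  moreover have "\<forall>x. x \<notin> carrier G \<longrightarrow> ?a x = 0" using g h by (auto simp: dlt_def)
  ultimately have el: "group_ring_elem G ?a"
    unfolding group_ring_elem_def by blast
  have "gr_mult G ?a (oriented_inv G s \<sigma> ?a)
      = gr_mult G (oriented_inv G s \<sigma> ?a) ?a"
    by (rule nrm[unfolded normal_group_ring_def, rule_format, OF el])
  then have "gr_mult G ?a (oriented_inv G s \<sigma> ?a) z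
      = gr_mult G (oriented_inv G s \<sigma> ?a) ?a z" by (rule fun_cong)
  then have eq: "gr_mult G ?a (\<lambda>k. of_int (\<sigma> g) * dlt (s g) k + of_int (\<sigma> h) * dlt (s h) k) z
      = gr_mult G (\<lambda>k. of_int (\<sigma> g) * dlt (s g) k + of_int (\<sigma> h) * dlt (s h) k) ?a z"
    unfolding oinv_two[OF inv g h, where \<sigma>=\<sigma>] .
  have sgh: "s g \<noteq> s h"
  proof
    assume "s g = s h"
    then have "s (s g) = s (s h)" by simp
    then show False using invol_facts(3)[OF inv g] invol_facts(3)[OF inv h] gh by simp
  qed
  have sg: "s g \<in> carrier G" and sh: "s h \<in> carrier G" using invol_facts(1)[OF inv] g h by auto
  have L: "gr_mult G ?a (\<lambda>k. of_int (\<sigma> g) * dlt (s g) k + of_int (\<sigma> h) * dlt (s h) k) z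
     = 1 * (of_int (\<sigma> g) * dlt (s g) (inv g \<otimes> z) + of_int (\<sigma> h) * dlt (s h) (inv g \<otimes> z))
     + 1 * (of_int (\<sigma> g) * dlt (s g) (inv h \<otimes> z) + of_int (\<sigma> h) * dlt (s h) (inv h \<otimes> z))"
    unfolding gr_mult_two[OF g h gh] using z by simp
  have R: "gr_mult G (\<lambda>k. of_int (\<sigma> g) * dlt (s g) k + of_int (\<sigma> h) * dlt (s h) k) ?a z
     = of_int (\<sigma> g) * (1 * dlt g (inv (s g) \<otimes> z) + 1 * dlt h (inv (s g) \<otimes> z))
     + of_int (\<sigma> h) * (1 * dlt g (inv (s h) \<otimes> z) + 1 * dlt h (inv (s h) \<otimes> z))"
    unfolding gr_mult_two[OF sg sh sgh] using z by simp
  show ?thesis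
    using eq L R
    by (simp only: dlt_shift[OF g _ z] dlt_shift[OF h _ z] dlt_shift[OF sg _ z] dlt_shift[OF sh _ z] g h sg sh mult_1 add.assoc)
qed


lemma lcan: "x \<in> carrier G \<Longrightarrow> y \<in> carrier G \<Longrightarrow> z \<in> carrier G \<Longrightarrow> (x \<otimes> y = x \<otimes> z) = (y = z)"
  by (metis Units_eq Units_l_cancel)

lemma sig_facts:
  assumes ori: "orientation G \<sigma>"
  shows sig_pm: "\<And>g. g \<in> carrier G \<Longrightarrow> \<sigma> g = 1 \<or> \<sigma> g = -1"
    and sig_mult: "\<And>g h. g \<in> carrier G \<Longrightarrow> h \<in> carrier G \<Longrightarrow> \<sigma> (g \<otimes> h) = \<sigma> g * \<sigma> h"
  using ori unfolding orientation_def by auto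

lemma sig_one:
  assumes ori: "orientation G \<sigma>"
  shows "\<sigma> \<one> = 1"
proof -
  have "\<sigma> \<one> = \<sigma> \<one> * \<sigma> \<one>" using sig_mult[OF ori, of \<one> \<one>] by simp
  then show ?thesis using sig_pm[OF ori, of \<one>] by auto
qed

lemma sig_inv:
  assumes ori: "orientation G \<sigma>" and g: "g \<in> carrier G"
  shows "\<sigma> (inv g) = \<sigma> g"
proof -
  have "\<sigma> g * \<sigma> (inv g) = 1" using sig_mult[OF ori g, of "inv g"] sig_one[OF ori] g by simp
  then show ?thesis using sig_pm[OF ori g] sig_pm[OF ori, of "inv g"] g by auto
qed

lemma Nmem: "g \<in> orient_kernel G \<sigma> \<longleftrightarrow> g \<in> carrier G \<and> \<sigma> g = 1"
  unfolding orient_kernel_def by auto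

lemma dlt_multi:
  assumes two: "(2::'f::field) \<noteq> 0"
    and eq: "\<And>z. P z \<Longrightarrow> (dlt p z + dlt q z :: 'f) = dlt r z + dlt t z"
    and "P p" "P q"
  shows "(p = r \<and> q = t) \<or> (p = t \<and> q = r)"
proof -
  have e1: "(dlt p p + dlt q p :: 'f) = dlt r p + dlt t p" using eq assms(3) by blast
  have e2: "(dlt p q + dlt q q :: 'f) = dlt r q + dlt t q" using eq assms(4) by blast
  have o2: "(1::'f) + 1 \<noteq> 0" using two by simp
  show ?thesis
  proof (cases "p = r")
    case True
    then show ?thesis using e2 o2 by (auto simp: dlt_def split: if_splits)
  next
    case False
    then have "p = t" using e1 o2 by (auto simp: dlt_def split: if_splits)
    then show ?thesis using e2 o2 False by (auto simp: dlt_def split: if_splits)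
  qed
qed

end

context group
begin

lemma main9:
  assumes inv: "group_involution G s" and ori: "orientation G \<sigma>"
    and nab: "\<not> comm_group G"
    and kern: "\<forall>g\<in>carrier G. g \<otimes> s g \<in> orient_kernel G \<sigma>"
    and nrm: "normal_group_ring G s \<sigma> TYPE('f::field)"
    and two: "(2::'f) \<noteq> 0"
    and ab: "\<forall>x\<in>orient_kernel G \<sigma>. \<forall>y\<in>orient_kernel G \<sigma>. x \<otimes> y = y \<otimes> x"
  shows "(\<forall>x\<in>carrier G - orient_kernel G \<sigma>. s x = x) \<and>
         (\<forall>n\<in>orient_kernel G \<sigma>. \<forall>a\<in>carrier G - orient_kernel G \<sigma>.
            s n = inv a \<otimes> n \<otimes> a \<and> s n = a \<otimes> n \<otimes> inv a)"
proof -
  let ?N = "orient_kernel G \<sigma>"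
  have sc: "\<And>g. g \<in> carrier G \<Longrightarrow> s g \<in> carrier G"
    and sm: "\<And>g h. g \<in> carrier G \<Longrightarrow> h \<in> carrier G \<Longrightarrow> s (g \<otimes> h) = s h \<otimes> s g"
    and ss: "\<And>g. g \<in> carrier G \<Longrightarrow> s (s g) = g"
    using invol_facts[OF inv] by auto
  have pm: "\<And>g. g \<in> carrier G \<Longrightarrow> \<sigma> g = 1 \<or> \<sigma> g = -1"
    and smul: "\<And>g h. g \<in> carrier G \<Longrightarrow> h \<in> carrier G \<Longrightarrow> \<sigma> (g \<otimes> h) = \<sigma> g * \<sigma> h"
    using sig_facts[OF ori] by auto
  have sigs: "\<sigma> (s g) = \<sigma> g" if g: "g \<in> carrier G" for g
  proof -
    have "\<sigma> (g \<otimes> s g) = 1" using kern g by (simp add: Nmem)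
    then have "\<sigma> g * \<sigma> (s g) = 1" using smul[OF g sc[OF g]] by simp
    then show ?thesis using pm[OF g] pm[OF sc[OF g]] by auto
  qed
  have notN: "\<sigma> g = -1" if "g \<in> carrier G" "g \<notin> ?N" for g
    using that pm[of g] by (auto simp: Nmem)
  have sN: "s n \<in> ?N" if "n \<in> ?N" for n
    using that sigs sc by (auto simp: Nmem)
  have invsame: "inv g \<otimes> h \<in> ?N" if "g \<in> carrier G" "h \<in> carrier G" "\<sigma> g = \<sigma> h" for g h
  proof -
    have "\<sigma> (inv g \<otimes> h) = \<sigma> g * \<sigma> h" using smul[of "inv g" h] sig_inv[OF ori] that by simp
    also have "\<dots> = 1" using that pm[of g] by auto
    finally show ?thesis using that by (simp add: Nmem)
  qed
  have R0: "g \<otimes> s g = s g \<otimes> g" if g: "g \<in> carrier G" for g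
  proof -
    have gsg: "g \<otimes> s g \<in> carrier G" using g sc by simp
    have "(of_int (\<sigma> g) * dlt (g \<otimes> s g) (g \<otimes> s g) :: 'f) = of_int (\<sigma> g) * dlt (s g \<otimes> g) (g \<otimes> s g)"
      by (rule single_eq[OF inv nrm g gsg])
    moreover have "(of_int (\<sigma> g) :: 'f) \<noteq> 0" using pm[OF g] by auto
    ultimately have "dlt (s g \<otimes> g) (g \<otimes> s g) = (1::'f)" by (simp add: dlt_def)
    then show ?thesis by (simp add: dlt_def split: if_splits)
  qed
  have two_eq: "(of_int (\<sigma> h) * dlt (g \<otimes> s h) z + of_int (\<sigma> g) * dlt (h \<otimes> s g) z :: 'f)
     = of_int (\<sigma> g) * dlt (s g \<otimes> h) z + of_int (\<sigma> h) * dlt (s h \<otimes> g) z"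
    if g: "g \<in> carrier G" and h: "h \<in> carrier G" and gh: "g \<noteq> h" and z: "z \<in> carrier G" for g h z
  proof -
    have "(of_int (\<sigma> g) * dlt (g \<otimes> s g) z + of_int (\<sigma> h) * dlt (g \<otimes> s h) z
          + (of_int (\<sigma> g) * dlt (h \<otimes> s g) z + of_int (\<sigma> h) * dlt (h \<otimes> s h) z) :: 'f)
       = of_int (\<sigma> g) * (dlt (s g \<otimes> g) z + dlt (s g \<otimes> h) z)
          + of_int (\<sigma> h) * (dlt (s h \<otimes> g) z + dlt (s h \<otimes> h) z)"
      by (rule pair_eq[OF inv nrm g h gh z])
    then show ?thesis using R0[OF g] R0[OF h] by (simp add: algebra_simps)
  qed
  have R1: "(x \<otimes> s n = n \<otimes> s x \<and> s x \<otimes> n = s n \<otimes> x) \<or> (x \<otimes> s n = s n \<otimes> x \<and> s x \<otimes> n = n \<otimes> s x)"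
    if x: "x \<in> carrier G" "x \<notin> ?N" and n: "n \<in> ?N" for x n
  proof -
    have nc: "n \<in> carrier G" and sn: "\<sigma> n = 1" using n by (auto simp: Nmem)
    have sx: "\<sigma> x = -1" using notN x by simp
    have xn: "x \<noteq> n" using x n by auto
    show ?thesis
    proof (rule dlt_multi[OF two, where P="\<lambda>z. z \<in> carrier G"])
      fix z assume z: "z \<in> carrier G"
      have "(of_int (\<sigma> n) * dlt (x \<otimes> s n) z + of_int (\<sigma> x) * dlt (n \<otimes> s x) z :: 'f)
        = of_int (\<sigma> x) * dlt (s x \<otimes> n) z + of_int (\<sigma> n) * dlt (s n \<otimes> x) z"
        by (rule two_eq[OF x(1) nc xn z])
      then show "(dlt (x \<otimes> s n) z + dlt (s x \<otimes> n) z :: 'f) = dlt (n \<otimes> s x) z + dlt (s n \<otimes> x) z"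
        using sx sn by (simp add: algebra_simps)
    qed (use x nc sc in auto)
  qed
  have R2: "(x \<otimes> s y = s x \<otimes> y \<and> y \<otimes> s x = s y \<otimes> x) \<or> (x \<otimes> s y = s y \<otimes> x \<and> y \<otimes> s x = s x \<otimes> y)"
    if x: "x \<in> carrier G" "x \<notin> ?N" and y: "y \<in> carrier G" "y \<notin> ?N" and xy: "x \<noteq> y" for x y
  proof -
    have sx: "\<sigma> x = -1" using notN x by simp
    have sy: "\<sigma> y = -1" using notN y by simp
    show ?thesis
    proof (rule dlt_multi[OF two, where P="\<lambda>z. z \<in> carrier G"])
      fix z assume z: "z \<in> carrier G"
      have "(of_int (\<sigma> y) * dlt (x \<otimes> s y) z + of_int (\<sigma> x) * dlt (y \<otimes> s x) z :: 'f)
        = of_int (\<sigma> x) * dlt (s x \<otimes> y) z + of_int (\<sigma> y) * dlt (s y \<otimes> x) z"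
        by (rule two_eq[OF x(1) y(1) xy z])
      then show "(dlt (x \<otimes> s y) z + dlt (y \<otimes> s x) z :: 'f) = dlt (s x \<otimes> y) z + dlt (s y \<otimes> x) z"
        using sx sy by (simp add: algebra_simps)
    qed (use x y sc in auto)
  qed
  have Nc: "n \<in> carrier G" if "n \<in> ?N" for n using that by (simp add: Nmem)
  have NN: "g \<otimes> h \<in> ?N" if "g \<in> ?N" "h \<in> ?N" for g h
    using that smul by (auto simp: Nmem)
  have exD: "\<exists>n\<in>?N. x \<otimes> n \<noteq> n \<otimes> x" if x: "x \<in> carrier G" "x \<notin> ?N" for x
  proof (rule ccontr)
    assume "\<not> ?thesis"
    then have cx: "\<And>n. n \<in> ?N \<Longrightarrow> x \<otimes> n = n \<otimes> x" by blast
    have A: "g \<otimes> m = m \<otimes> g" if g: "g \<in> carrier G" and m: "m \<in> ?N" for g m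
    proof (cases "g \<in> ?N")
      case True then show ?thesis using ab m by blast
    next
      case False
      define k where "k = inv x \<otimes> g"
      have k: "k \<in> ?N" unfolding k_def using invsame[OF x(1) g] notN x g False by simp
      have gk: "g = x \<otimes> k" unfolding k_def using x g by (simp add: m_assoc[symmetric])
      have mc: "m \<in> carrier G" and kc: "k \<in> carrier G" using m k Nc by auto
      have "m \<otimes> g = (m \<otimes> x) \<otimes> k" using gk mc kc x by (simp add: m_assoc)
      also have "\<dots> = x \<otimes> (m \<otimes> k)" using cx[OF m] mc kc x by (simp add: m_assoc[symmetric])
      also have "\<dots> = x \<otimes> (k \<otimes> m)" using ab m k by simp
      also have "\<dots> = g \<otimes> m" using gk mc kc x by (simp add: m_assoc)
      finally show ?thesis by simp
    qed
    have "comm_group G"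
    proof (rule group_comm_groupI)
      fix g h assume g: "g \<in> carrier G" and h: "h \<in> carrier G"
      show "g \<otimes> h = h \<otimes> g"
      proof (cases "h \<in> ?N")
        case True then show ?thesis using A g by blast
      next
        case hN: False
        show ?thesis
        proof (cases "g \<in> ?N")
          case True then show ?thesis using A h by metis
        next
          case False
          define k where "k = inv g \<otimes> h"
          have k: "k \<in> ?N" unfolding k_def using invsame[OF g h] notN g h False hN by simp
          have kc: "k \<in> carrier G" using k Nc by auto
          have hk: "h = g \<otimes> k" unfolding k_def using g h by (simp add: m_assoc[symmetric])
          have "h \<otimes> g = g \<otimes> (k \<otimes> g)" using hk g kc by (simp add: m_assoc)
          also have "\<dots> = g \<otimes> (g \<otimes> k)" using A[OF g k] by simp
          also have "\<dots> = g \<otimes> h" using hk g kc by (simp add: m_assoc)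
          finally show ?thesis by simp
        qed
      qed
    qed
    then show False using nab by simp
  qed
  have D: "x \<otimes> n = s n \<otimes> s x \<and> s x \<otimes> s n = n \<otimes> x"
    if x: "x \<in> carrier G" "x \<notin> ?N" and n: "n \<in> ?N" and nc: "x \<otimes> n \<noteq> n \<otimes> x" for x n
    using R1[OF x sN[OF n]] ss[OF Nc[OF n]] nc by auto
  have fix1: "s x = x" if x: "x \<in> carrier G" "x \<notin> ?N" for x
  proof -
    obtain n where n: "n \<in> ?N" and nc: "x \<otimes> n \<noteq> n \<otimes> x" using exD[OF x] by blast
    have ncar: "n \<in> carrier G" using Nc n by simp
    define y where "y = x \<otimes> n"
    have yc: "y \<in> carrier G" unfolding y_def using x ncar by simp
    have yN: "y \<notin> ?N"
    proof
      assume "y \<in> ?N"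
      then have "\<sigma> y = 1" by (simp add: Nmem)
      moreover have "\<sigma> y = \<sigma> x * \<sigma> n" unfolding y_def using smul x ncar by simp
      ultimately show False using notN[OF x] n by (simp add: Nmem)
    qed
    have xy: "x \<noteq> y"
    proof
      assume "x = y"
      then have "n = \<one>" unfolding y_def using x ncar by simp
      then show False using nc x by simp
    qed
    have sy: "s y = y" unfolding y_def using sm[OF x(1) ncar] D[OF x n nc] by simp
    have "(x \<otimes> y = s x \<otimes> y) \<or> (x \<otimes> y = y \<otimes> x)"
      using R2[OF x yc yN xy] sy by auto
    then show ?thesis
    proof
      assume "x \<otimes> y = s x \<otimes> y"
      then show ?thesis using x yc sc by simp
    next
      assume "x \<otimes> y = y \<otimes> x"
      then have "x \<otimes> (x \<otimes> n) = x \<otimes> (n \<otimes> x)" unfolding y_def using x ncar by (simp add: m_assoc)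
      then have "x \<otimes> n = n \<otimes> x" using lcan x ncar by simp
      then show ?thesis using nc by simp
    qed
  qed
  have fix2: "s m = m" if x: "x \<in> carrier G" "x \<notin> ?N" and m: "m \<in> ?N" and mc: "x \<otimes> m = m \<otimes> x" for x m
  proof -
    obtain n where n: "n \<in> ?N" and nc: "x \<otimes> n \<noteq> n \<otimes> x" using exD[OF x] by blast
    have ncar: "n \<in> carrier G" and mcar: "m \<in> carrier G" using Nc n m by auto
    have nm: "n \<otimes> m \<in> ?N" using NN n m by simp
    have nmc: "x \<otimes> (n \<otimes> m) \<noteq> (n \<otimes> m) \<otimes> x"
    proof
      assume "x \<otimes> (n \<otimes> m) = (n \<otimes> m) \<otimes> x"
      also have "\<dots> = (n \<otimes> x) \<otimes> m" using mc x ncar mcar by (simp add: m_assoc)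
      finally have "(x \<otimes> n) \<otimes> m = (n \<otimes> x) \<otimes> m" using x ncar mcar by (simp add: m_assoc)
      then show False using nc x ncar mcar by simp
    qed
    have snc: "s n \<in> carrier G" and smc: "s m \<in> carrier G" and sxc: "s x \<in> carrier G" using sc x ncar mcar by auto
    have "s x \<otimes> s (n \<otimes> m) = (n \<otimes> m) \<otimes> x" using D[OF x nm nmc] by simp
    moreover have "s (n \<otimes> m) = s n \<otimes> s m" using sm[OF ncar mcar] ab sN[OF n] sN[OF m] by simp
    ultimately have "s x \<otimes> (s n \<otimes> s m) = (n \<otimes> x) \<otimes> m" using mc x ncar mcar by (simp add: m_assoc)
    also have "\<dots> = (s x \<otimes> s n) \<otimes> m" using D[OF x n nc] by simp
    finally have "(s x \<otimes> s n) \<otimes> s m = (s x \<otimes> s n) \<otimes> m" using snc smc sxc by (simp add: m_assoc)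
    then show ?thesis using lcan snc smc sxc mcar by simp
  qed
  have part2: "s n = inv a \<otimes> n \<otimes> a \<and> s n = a \<otimes> n \<otimes> inv a"
    if n: "n \<in> ?N" and a: "a \<in> carrier G" "a \<notin> ?N" for n a
  proof -
    have ncar: "n \<in> carrier G" using Nc n by simp
    have aa: "a \<otimes> a \<in> ?N" using smul a notN[OF a] by (simp add: Nmem)
    have swap: "inv a \<otimes> n \<otimes> a = a \<otimes> n \<otimes> inv a"
    proof -
      have "n \<otimes> (a \<otimes> a) = (a \<otimes> a) \<otimes> n" using ab aa n by blast
      then have "inv a \<otimes> (n \<otimes> (a \<otimes> a)) \<otimes> inv a = inv a \<otimes> ((a \<otimes> a) \<otimes> n) \<otimes> inv a" by simp
      moreover have c: "\<And>y. y \<in> carrier G \<Longrightarrow> inv a \<otimes> (a \<otimes> y) = y"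
        using a by (simp add: m_assoc[symmetric])
      ultimately show ?thesis using a ncar by (simp add: m_assoc)
    qed
    show ?thesis
    proof (cases "a \<otimes> n = n \<otimes> a")
      case True
      have "s n = n" using fix2[OF a n True] .
      moreover have "a \<otimes> n \<otimes> inv a = n" using True a ncar by (simp add: m_assoc)
      ultimately show ?thesis using swap by simp
    next
      case False
      have "a \<otimes> n = s n \<otimes> a" using D[OF a n False] fix1[OF a] by simp
      then have "a \<otimes> n \<otimes> inv a = s n \<otimes> a \<otimes> inv a" by simp
      then have "a \<otimes> n \<otimes> inv a = s n" using a sc ncar by (simp add: m_assoc)
      then show ?thesis using swap by simp
    qed
  qed
  show ?thesis using fix1 part2 by blast
qed

end

theorem lemma9:
  fixes G :: "('g, 'b) monoid_scheme" and s :: "'g \<Rightarrow> 'g" and \<sigma> :: "'g \<Rightarrow> int"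
  assumes "group G"
    and "infinite (UNIV :: 'f::field set)"
    and "(2::'f) \<noteq> 0"
    and "\<not> comm_group G"
    and "group_involution G s"
    and "orientation G \<sigma>"
    and "\<exists>g\<in>carrier G. \<sigma> g \<noteq> 1"
    and "\<forall>g\<in>carrier G. g \<otimes>\<^bsub>G\<^esub> s g \<in> orient_kernel G \<sigma>"
    and "normal_group_ring G s \<sigma> TYPE('f)"
    and "\<forall>x\<in>orient_kernel G \<sigma>. \<forall>y\<in>orient_kernel G \<sigma>. x \<otimes>\<^bsub>G\<^esub> y = y \<otimes>\<^bsub>G\<^esub> x"
  shows "(\<forall>x\<in>carrier G - orient_kernel G \<sigma>. s x = x) \<and>
         (\<forall>n\<in>orient_kernel G \<sigma>. \<forall>a\<in>carrier G - orient_kernel G \<sigma>.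
            s n = inv\<^bsub>G\<^esub> a \<otimes>\<^bsub>G\<^esub> n \<otimes>\<^bsub>G\<^esub> a \<and> s n = a \<otimes>\<^bsub>G\<^esub> n \<otimes>\<^bsub>G\<^esub> inv\<^bsub>G\<^esub> a)"
  by (rule group.main9[OF assms(1) assms(5) assms(6) assms(4) assms(8) assms(9) assms(3) assms(10)])

end
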